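(* For any $i,j\in\{1,\dots,5\}$, if $\mathrm{id}\notin\operatorname{Pol}(R_i,R'_j)$ and $\neg\notin\operatorname{Pol}(R_i,R'_j)$, then $\operatorname{Pol}(R_i,R'_j)$ is exactly the set of constant Boolean functions (of all arities).
   Context: Tuples in $\{0,1\}^4$ are written as strings $abcd$. The relations $R_1,\dots,R_5\subseteq\{0,1\}^4$ are $R_1=\{0000,1000,0100,1100,1010,0110,1001,0101,0011,1011,0111,1111\}$, $R_2=\{0000,1000,0100,1100,1010,0101,0011,1111\}$, $R_3=\{0000,1100,1010,0101,0011,1011,0111,1111\}$, $R_4=\{0000,1100,1010,0101,0011,1111\}$, $R_5=\{0000,1100,1010,0110,1001,0101,0011,1111\}$. For $S\subseteq\{0,1\}^4$, $S':=S\cup\{(a,b,c,d)\in\{0,1\}^4\mid \nexists x\colon (a,b,c,x)\in S\}$. An $n$-ary Boolean function $f$ preserves $(R,S)$ if $f(\mathbf{a}_1,\dots,\mathbf{a}_n)\in S$ (componentwise) for all $\mathbf{a}_1,\dots,\mathbf{a}_n\in R$; $\operatorname{Pol}(R,S)$ is the set of all Boolean functions of all arities preserving $(R,S)$. $\mathrm{id}$ is the unary identity and $\neg x=1-x$. *)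

theory Defs
  imports Main
begin

text \<open>Boolean tuples in {0,1}^4 are bool lists of length 4; a string such as ''1010''
  denotes the tuple (1,0,1,0).\<close>
definition tup :: "string \<Rightarrow> bool list" where
  "tup s = map (\<lambda>c. c = CHR ''1'') s"

definition R1 :: "bool list set" where
  "R1 = tup ` {''0000'',''1000'',''0100'',''1100'',''1010'',''0110'',''1001'',''0101'',''0011'',''1011'',''0111'',''1111''}"
definition R2 :: "bool list set" where
  "R2 = tup ` {''0000'',''1000'',''0100'',''1100'',''1010'',''0101'',''0011'',''1111''}"
definition R3 :: "bool list set" where
  "R3 = tup ` {''0000'',''1100'',''1010'',''0101'',''0011'',''1011'',''0111'',''1111''}"
definition R4 :: "bool list set" where
  "R4 = tup ` {''0000'',''1100'',''1010'',''0101'',''0011'',''1111''}"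
definition R5 :: "bool list set" where
  "R5 = tup ` {''0000'',''1100'',''1010'',''0110'',''1001'',''0101'',''0011'',''1111''}"

definition Rel :: "nat \<Rightarrow> bool list set" where
  "Rel i = (if i = 1 then R1 else if i = 2 then R2 else if i = 3 then R3
            else if i = 4 then R4 else R5)"

definition prime_rel :: "bool list set \<Rightarrow> bool list set" where
  "prime_rel S = S \<union> {t. length t = 4 \<and> \<not> (\<exists>x. take 3 t @ [x] \<in> S)}"

text \<open>An n-ary Boolean function is represented by its arity n and a map f on bool lists,
  only the values on lists of length n being relevant.  f preserves (R,S) iff for all
  a_1..a_n in R, the componentwise application lies in S.\<close>
definition preserves :: "nat \<Rightarrow> (bool list \<Rightarrow> bool) \<Rightarrow> bool list set \<Rightarrow> bool list set \<Rightarrow> bool" where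
  "preserves n f R S =
     (\<forall>as. length as = n \<and> set as \<subseteq> R \<longrightarrow>
        map (\<lambda>k. f (map (\<lambda>a. a ! k) as)) [0..<4] \<in> S)"

definition is_constant_fun :: "nat \<Rightarrow> (bool list \<Rightarrow> bool) \<Rightarrow> bool" where
  "is_constant_fun n f = (\<exists>c. \<forall>xs. length xs = n \<longrightarrow> f xs = c)"

definition id_fun :: "bool list \<Rightarrow> bool" where "id_fun xs = hd xs"
definition neg_fun :: "bool list \<Rightarrow> bool" where "neg_fun xs = (\<not> hd xs)"

end

theory Submission
  imports Defs
begin

definition opf :: "nat \<Rightarrow> bool \<Rightarrow> bool \<Rightarrow> bool" where
  "opf u a b = odd (u div 2 ^ (2 * (if a then 1 else 0) + (if b then 1 else 0)))"

lemma key: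
  assumes P: "preserves n f R S" and lx: "length x = n" and ly: "length y = n"
    and RR: "\<forall>a b. [opf u0 a b, opf u1 a b, opf u2 a b, opf u3 a b] \<in> R"
  shows "[f (map2 (opf u0) x y), f (map2 (opf u1) x y), f (map2 (opf u2) x y), f (map2 (opf u3) x y)] \<in> S"
proof -
  define as where "as = map2 (\<lambda>a b. [opf u0 a b, opf u1 a b, opf u2 a b, opf u3 a b]) x y"
  have "length as = n" using lx ly by (simp add: as_def)
  moreover have "set as \<subseteq> R" using RR by (auto simp: as_def set_zip)
  ultimately have "map (\<lambda>k. f (map (\<lambda>a. a ! k) as)) [0..<4] \<in> S" using P unfolding preserves_def by blast
  moreover have "map (\<lambda>k. f (map (\<lambda>a. a ! k) as)) [0..<4] =
     [f (map2 (opf u0) x y), f (map2 (opf u1) x y), f (map2 (opf u2) x y), f (map2 (opf u3) x y)]"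
    by (simp add: as_def upt_rec o_def split_def)
  ultimately show ?thesis by simp
qed

lemma map2_fst: "length x = length y \<Longrightarrow> map2 (\<lambda>a b. a) x y = x"
  by (induction x y rule: list_induct2) auto
lemma map2_snd: "length x = length y \<Longrightarrow> map2 (\<lambda>a b. b) x y = y"
  by (induction x y rule: list_induct2) auto

definition good :: "nat \<Rightarrow> nat \<Rightarrow> bool" where
  "good i j = (\<forall>V::nat\<Rightarrow>bool. (\<forall>u0 u1 u2 u3. (\<forall>a b. [opf u0 a b, opf u1 a b, opf u2 a b, opf u3 a b] \<in> Rel i) \<longrightarrow> [V u0, V u1, V u2, V u3] \<in> prime_rel (Rel j)) \<longrightarrow> V 12 = V 10)"

lemma good_const:
  assumes G: "good i j" and P: "preserves n f (Rel i) (prime_rel (Rel j))"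
  shows "is_constant_fun n f"
proof -
  have eq: "f x = f y" if lx: "length x = n" and ly: "length y = n" for x y
  proof -
    define V where "V u = f (map2 (opf u) x y)" for u
    have "V 12 = V 10"
      using G[unfolded good_def, rule_format, of V] key[OF P lx ly] unfolding V_def by blast
    moreover have "opf 12 = (\<lambda>a b. a)" "opf 10 = (\<lambda>a b. b)" by (auto simp: opf_def fun_eq_iff)
    ultimately show ?thesis using lx ly by (simp add: V_def map2_fst map2_snd)
  qed
  show ?thesis unfolding is_constant_fun_def
  proof (intro exI allI impI)
    fix xs :: "bool list" assume "length xs = n"
    thus "f xs = f (replicate n False)" by (rule eq) simp
  qed
qed

lemma id_pres: "\<forall>a\<in>R. length a = 4 \<and> a \<in> S \<Longrightarrow> preserves 1 id_fun R S"
  unfolding preserves_def id_fun_def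
proof (intro allI impI)
  fix as :: "bool list list" assume A: "\<forall>a\<in>R. length a = 4 \<and> a \<in> S" and B: "length as = 1 \<and> set as \<subseteq> R"
  then obtain a where "as = [a]" by (auto simp: length_Suc_conv)
  with A B have "length a = 4" "a \<in> S" by auto
  moreover have "map (\<lambda>k. hd (map (\<lambda>a. a ! k) [a])) [0..<4] = map (\<lambda>k. a ! k) [0..<length a]" using \<open>length a = 4\<close> by simp
  moreover have "map ((!) a) [0..<4] = a" using \<open>length a = 4\<close> by (metis map_nth)
  ultimately show "map (\<lambda>k. hd (map (\<lambda>a. a ! k) as)) [0..<4] \<in> S" using \<open>as = [a]\<close> by simp
qed

lemma neg_pres: "\<forall>a\<in>R. length a = 4 \<and> map Not a \<in> S \<Longrightarrow> preserves 1 neg_fun R S"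
  unfolding preserves_def neg_fun_def
proof (intro allI impI)
  fix as :: "bool list list" assume A: "\<forall>a\<in>R. length a = 4 \<and> map Not a \<in> S" and B: "length as = 1 \<and> set as \<subseteq> R"
  then obtain a where "as = [a]" by (auto simp: length_Suc_conv)
  with A B have "length a = 4" "map Not a \<in> S" by auto
  moreover have "map (\<lambda>k. \<not> hd (map (\<lambda>a. a ! k) [a])) [0..<4] = map Not (map (\<lambda>k. a ! k) [0..<length a])" using \<open>length a = 4\<close> by simp
  moreover have "map ((!) a) [0..<4] = a" using \<open>length a = 4\<close> by (metis map_nth)
  moreover have "map (\<lambda>k. \<not> a ! k) [0..<4] = map Not (map ((!) a) [0..<4])" by simp
  ultimately show "map (\<lambda>k. \<not> hd (map (\<lambda>a. a ! k) as)) [0..<4] \<in> S" using \<open>as = [a]\<close> by simp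
qed

lemma R1_eq: "R1 = {[False,False,False,False], [False,False,True,True], [False,True,False,False], [False,True,False,True], [False,True,True,False], [False,True,True,True], [True,False,False,False], [True,False,False,True], [True,False,True,False], [True,False,True,True], [True,True,False,False], [True,True,True,True]}"
  unfolding R1_def tup_def by auto

lemma R2_eq: "R2 = {[False,False,False,False], [False,False,True,True], [False,True,False,False], [False,True,False,True], [True,False,False,False], [True,False,True,False], [True,True,False,False], [True,True,True,True]}"
  unfolding R2_def tup_def by auto

lemma R3_eq: "R3 = {[False,False,False,False], [False,False,True,True], [False,True,False,True], [False,True,True,True], [True,False,True,False], [True,False,True,True], [True,True,False,False], [True,True,True,True]}"
  unfolding R3_def tup_def by auto

lemma R4_eq: "R4 = {[False,False,False,False], [False,False,True,True], [False,True,False,True], [True,False,True,False], [True,True,False,False], [True,True,True,True]}"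
  unfolding R4_def tup_def by auto

lemma R5_eq: "R5 = {[False,False,False,False], [False,False,True,True], [False,True,False,True], [False,True,True,False], [True,False,False,True], [True,False,True,False], [True,True,False,False], [True,True,True,True]}"
  unfolding R5_def tup_def by auto

lemma mem1: "([a,b,c,d] \<in> prime_rel (Rel 1)) = ((\<not> a \<and> \<not> b \<and> \<not> c \<and> \<not> d) \<or> (\<not> a \<and> \<not> b \<and> c \<and> d) \<or> (\<not> a \<and> b \<and> \<not> c \<and> \<not> d) \<or> (\<not> a \<and> b \<and> \<not> c \<and> d) \<or> (\<not> a \<and> b \<and> c \<and> \<not> d) \<or> (\<not> a \<and> b \<and> c \<and> d) \<or> (a \<and> \<not> b \<and> \<not> c \<and> \<not> d) \<or> (a \<and> \<not> b \<and> \<not> c \<and> d) \<or> (a \<and> \<not> b \<and> c \<and> \<not> d) \<or> (a \<and> \<not> b \<and> c \<and> d) \<or> (a \<and> b \<and> \<not> c \<and> \<not> d) \<or> (a \<and> b \<and> c \<and> d))"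
  by (cases a; cases b; cases c; cases d) (auto simp: prime_rel_def Rel_def R1_eq)

lemma mem2: "([a,b,c,d] \<in> prime_rel (Rel 2)) = ((\<not> a \<and> \<not> b \<and> \<not> c \<and> \<not> d) \<or> (\<not> a \<and> \<not> b \<and> c \<and> d) \<or> (\<not> a \<and> b \<and> \<not> c \<and> \<not> d) \<or> (\<not> a \<and> b \<and> \<not> c \<and> d) \<or> (\<not> a \<and> b \<and> c \<and> \<not> d) \<or> (\<not> a \<and> b \<and> c \<and> d) \<or> (a \<and> \<not> b \<and> \<not> c \<and> \<not> d) \<or> (a \<and> \<not> b \<and> c \<and> \<not> d) \<or> (a \<and> b \<and> \<not> c \<and> \<not> d) \<or> (a \<and> b \<and> c \<and> d))"
  by (cases a; cases b; cases c; cases d) (auto simp: prime_rel_def Rel_def R2_eq)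

lemma mem3: "([a,b,c,d] \<in> prime_rel (Rel 3)) = ((\<not> a \<and> \<not> b \<and> \<not> c \<and> \<not> d) \<or> (\<not> a \<and> \<not> b \<and> c \<and> d) \<or> (\<not> a \<and> b \<and> \<not> c \<and> d) \<or> (\<not> a \<and> b \<and> c \<and> d) \<or> (a \<and> \<not> b \<and> \<not> c \<and> \<not> d) \<or> (a \<and> \<not> b \<and> \<not> c \<and> d) \<or> (a \<and> \<not> b \<and> c \<and> \<not> d) \<or> (a \<and> \<not> b \<and> c \<and> d) \<or> (a \<and> b \<and> \<not> c \<and> \<not> d) \<or> (a \<and> b \<and> c \<and> d))"
  by (cases a; cases b; cases c; cases d) (auto simp: prime_rel_def Rel_def R3_eq)

lemma mem4: "([a,b,c,d] \<in> prime_rel (Rel 4)) = ((\<not> a \<and> \<not> b \<and> \<not> c \<and> \<not> d) \<or> (\<not> a \<and> \<not> b \<and> c \<and> d) \<or> (\<not> a \<and> b \<and> \<not> c \<and> d) \<or> (\<not> a \<and> b \<and> c \<and> \<not> d) \<or> (\<not> a \<and> b \<and> c \<and> d) \<or> (a \<and> \<not> b \<and> \<not> c \<and> \<not> d) \<or> (a \<and> \<not> b \<and> \<not> c \<and> d) \<or> (a \<and> \<not> b \<and> c \<and> \<not> d) \<or> (a \<and> b \<and> \<not> c \<and> \<not> d) \<or> (a \<and> b \<and> c \<and> d))"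
  by (cases a; cases b; cases c; cases d) (auto simp: prime_rel_def Rel_def R4_eq)

lemma mem5: "([a,b,c,d] \<in> prime_rel (Rel 5)) = ((\<not> a \<and> \<not> b \<and> \<not> c \<and> \<not> d) \<or> (\<not> a \<and> \<not> b \<and> c \<and> d) \<or> (\<not> a \<and> b \<and> \<not> c \<and> d) \<or> (\<not> a \<and> b \<and> c \<and> \<not> d) \<or> (a \<and> \<not> b \<and> \<not> c \<and> d) \<or> (a \<and> \<not> b \<and> c \<and> \<not> d) \<or> (a \<and> b \<and> \<not> c \<and> \<not> d) \<or> (a \<and> b \<and> c \<and> d))"
  by (cases a; cases b; cases c; cases d) (auto simp: prime_rel_def Rel_def R5_eq)

lemma good_1_2: "good 1 2"
  unfolding good_def
proof (intro allI impI)
  fix V :: "nat \<Rightarrow> bool"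
  assume H: "\<forall>u0 u1 u2 u3. (\<forall>a b. [opf u0 a b, opf u1 a b, opf u2 a b, opf u3 a b] \<in> Rel 1) \<longrightarrow> [V u0, V u1, V u2, V u3] \<in> prime_rel (Rel 2)"
  have c0: "[V 2, V 12, V 2, V 10] \<in> prime_rel (Rel 2)"
    using H[rule_format, of 2 12 2 10] by (simp add: Rel_def R1_eq opf_def all_bool_eq)
  have c1: "[V 4, V 2, V 10, V 12] \<in> prime_rel (Rel 2)"
    using H[rule_format, of 4 2 10 12] by (simp add: Rel_def R1_eq opf_def all_bool_eq)
  show "V 12 = V 10" using c0 c1 unfolding mem2 by argo
qed

lemma good_1_3: "good 1 3"
  unfolding good_def
proof (intro allI impI)
  fix V :: "nat \<Rightarrow> bool"
  assume H: "\<forall>u0 u1 u2 u3. (\<forall>a b. [opf u0 a b, opf u1 a b, opf u2 a b, opf u3 a b] \<in> Rel 1) \<longrightarrow> [V u0, V u1, V u2, V u3] \<in> prime_rel (Rel 3)"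
  have c0: "[V 2, V 12, V 2, V 10] \<in> prime_rel (Rel 3)"
    using H[rule_format, of 2 12 2 10] by (simp add: Rel_def R1_eq opf_def all_bool_eq)
  have c1: "[V 4, V 2, V 10, V 12] \<in> prime_rel (Rel 3)"
    using H[rule_format, of 4 2 10 12] by (simp add: Rel_def R1_eq opf_def all_bool_eq)
  show "V 12 = V 10" using c0 c1 unfolding mem3 by argo
qed

lemma good_1_4: "good 1 4"
  unfolding good_def
proof (intro allI impI)
  fix V :: "nat \<Rightarrow> bool"
  assume H: "\<forall>u0 u1 u2 u3. (\<forall>a b. [opf u0 a b, opf u1 a b, opf u2 a b, opf u3 a b] \<in> Rel 1) \<longrightarrow> [V u0, V u1, V u2, V u3] \<in> prime_rel (Rel 4)"
  have c0: "[V 2, V 12, V 2, V 10] \<in> prime_rel (Rel 4)"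
    using H[rule_format, of 2 12 2 10] by (simp add: Rel_def R1_eq opf_def all_bool_eq)
  show "V 12 = V 10" using c0 unfolding mem4 by argo
qed

lemma good_1_5: "good 1 5"
  unfolding good_def
proof (intro allI impI)
  fix V :: "nat \<Rightarrow> bool"
  assume H: "\<forall>u0 u1 u2 u3. (\<forall>a b. [opf u0 a b, opf u1 a b, opf u2 a b, opf u3 a b] \<in> Rel 1) \<longrightarrow> [V u0, V u1, V u2, V u3] \<in> prime_rel (Rel 5)"
  have c0: "[V 2, V 12, V 2, V 10] \<in> prime_rel (Rel 5)"
    using H[rule_format, of 2 12 2 10] by (simp add: Rel_def R1_eq opf_def all_bool_eq)
  show "V 12 = V 10" using c0 unfolding mem5 by argo
qed

lemma good_2_4: "good 2 4"
  unfolding good_def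
proof (intro allI impI)
  fix V :: "nat \<Rightarrow> bool"
  assume H: "\<forall>u0 u1 u2 u3. (\<forall>a b. [opf u0 a b, opf u1 a b, opf u2 a b, opf u3 a b] \<in> Rel 2) \<longrightarrow> [V u0, V u1, V u2, V u3] \<in> prime_rel (Rel 4)"
  have c0: "[V 0, V 1, V 0, V 0] \<in> prime_rel (Rel 4)"
    using H[rule_format, of 0 1 0 0] by (simp add: Rel_def R2_eq opf_def all_bool_eq)
  have c1: "[V 0, V 1, V 2, V 3] \<in> prime_rel (Rel 4)"
    using H[rule_format, of 0 1 2 3] by (simp add: Rel_def R2_eq opf_def all_bool_eq)
  have c2: "[V 0, V 1, V 4, V 5] \<in> prime_rel (Rel 4)"
    using H[rule_format, of 0 1 4 5] by (simp add: Rel_def R2_eq opf_def all_bool_eq)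
  have c3: "[V 0, V 1, V 6, V 7] \<in> prime_rel (Rel 4)"
    using H[rule_format, of 0 1 6 7] by (simp add: Rel_def R2_eq opf_def all_bool_eq)
  have c4: "[V 0, V 1, V 8, V 9] \<in> prime_rel (Rel 4)"
    using H[rule_format, of 0 1 8 9] by (simp add: Rel_def R2_eq opf_def all_bool_eq)
  have c5: "[V 0, V 1, V 10, V 11] \<in> prime_rel (Rel 4)"
    using H[rule_format, of 0 1 10 11] by (simp add: Rel_def R2_eq opf_def all_bool_eq)
  have c6: "[V 0, V 1, V 12, V 13] \<in> prime_rel (Rel 4)"
    using H[rule_format, of 0 1 12 13] by (simp add: Rel_def R2_eq opf_def all_bool_eq)
  have c7: "[V 0, V 1, V 14, V 15] \<in> prime_rel (Rel 4)"
    using H[rule_format, of 0 1 14 15] by (simp add: Rel_def R2_eq opf_def all_bool_eq)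
  have c8: "[V 0, V 2, V 0, V 0] \<in> prime_rel (Rel 4)"
    using H[rule_format, of 0 2 0 0] by (simp add: Rel_def R2_eq opf_def all_bool_eq)
  have c9: "[V 0, V 12, V 2, V 10] \<in> prime_rel (Rel 4)"
    using H[rule_format, of 0 12 2 10] by (simp add: Rel_def R2_eq opf_def all_bool_eq)
  show "V 12 = V 10" using c0 c1 c2 c3 c4 c5 c6 c7 c8 c9 unfolding mem4 by argo
qed

lemma good_2_5: "good 2 5"
  unfolding good_def
proof (intro allI impI)
  fix V :: "nat \<Rightarrow> bool"
  assume H: "\<forall>u0 u1 u2 u3. (\<forall>a b. [opf u0 a b, opf u1 a b, opf u2 a b, opf u3 a b] \<in> Rel 2) \<longrightarrow> [V u0, V u1, V u2, V u3] \<in> prime_rel (Rel 5)"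
  have c0: "[V 10, V 12, V 0, V 0] \<in> prime_rel (Rel 5)"
    using H[rule_format, of 10 12 0 0] by (simp add: Rel_def R2_eq opf_def all_bool_eq)
  show "V 12 = V 10" using c0 unfolding mem5 by argo
qed

lemma good_3_4: "good 3 4"
  unfolding good_def
proof (intro allI impI)
  fix V :: "nat \<Rightarrow> bool"
  assume H: "\<forall>u0 u1 u2 u3. (\<forall>a b. [opf u0 a b, opf u1 a b, opf u2 a b, opf u3 a b] \<in> Rel 3) \<longrightarrow> [V u0, V u1, V u2, V u3] \<in> prime_rel (Rel 4)"
  have c0: "[V 0, V 10, V 12, V 14] \<in> prime_rel (Rel 4)"
    using H[rule_format, of 0 10 12 14] by (simp add: Rel_def R3_eq opf_def all_bool_eq)
  have c1: "[V 14, V 0, V 14, V 14] \<in> prime_rel (Rel 4)"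
    using H[rule_format, of 14 0 14 14] by (simp add: Rel_def R3_eq opf_def all_bool_eq)
  show "V 12 = V 10" using c0 c1 unfolding mem4 by argo
qed

lemma good_3_5: "good 3 5"
  unfolding good_def
proof (intro allI impI)
  fix V :: "nat \<Rightarrow> bool"
  assume H: "\<forall>u0 u1 u2 u3. (\<forall>a b. [opf u0 a b, opf u1 a b, opf u2 a b, opf u3 a b] \<in> Rel 3) \<longrightarrow> [V u0, V u1, V u2, V u3] \<in> prime_rel (Rel 5)"
  have c0: "[V 10, V 12, V 6, V 6] \<in> prime_rel (Rel 5)"
    using H[rule_format, of 10 12 6 6] by (simp add: Rel_def R3_eq opf_def all_bool_eq)
  show "V 12 = V 10" using c0 unfolding mem5 by argo
qed

lemma good_5_2: "good 5 2"
  unfolding good_def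
proof (intro allI impI)
  fix V :: "nat \<Rightarrow> bool"
  assume H: "\<forall>u0 u1 u2 u3. (\<forall>a b. [opf u0 a b, opf u1 a b, opf u2 a b, opf u3 a b] \<in> Rel 5) \<longrightarrow> [V u0, V u1, V u2, V u3] \<in> prime_rel (Rel 2)"
  have c0: "[V 0, V 6, V 10, V 12] \<in> prime_rel (Rel 2)"
    using H[rule_format, of 0 6 10 12] by (simp add: Rel_def R5_eq opf_def all_bool_eq)
  have c1: "[V 1, V 7, V 0, V 6] \<in> prime_rel (Rel 2)"
    using H[rule_format, of 1 7 0 6] by (simp add: Rel_def R5_eq opf_def all_bool_eq)
  have c2: "[V 7, V 1, V 1, V 7] \<in> prime_rel (Rel 2)"
    using H[rule_format, of 7 1 1 7] by (simp add: Rel_def R5_eq opf_def all_bool_eq)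
  have c3: "[V 0, V 6, V 6, V 0] \<in> prime_rel (Rel 2)"
    using H[rule_format, of 0 6 6 0] by (simp add: Rel_def R5_eq opf_def all_bool_eq)
  show "V 12 = V 10" using c0 c1 c2 c3 unfolding mem2 by argo
qed

lemma good_5_3: "good 5 3"
  unfolding good_def
proof (intro allI impI)
  fix V :: "nat \<Rightarrow> bool"
  assume H: "\<forall>u0 u1 u2 u3. (\<forall>a b. [opf u0 a b, opf u1 a b, opf u2 a b, opf u3 a b] \<in> Rel 5) \<longrightarrow> [V u0, V u1, V u2, V u3] \<in> prime_rel (Rel 3)"
  have c0: "[V 0, V 6, V 10, V 12] \<in> prime_rel (Rel 3)"
    using H[rule_format, of 0 6 10 12] by (simp add: Rel_def R5_eq opf_def all_bool_eq)
  have c1: "[V 1, V 7, V 0, V 6] \<in> prime_rel (Rel 3)"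
    using H[rule_format, of 1 7 0 6] by (simp add: Rel_def R5_eq opf_def all_bool_eq)
  have c2: "[V 7, V 1, V 1, V 7] \<in> prime_rel (Rel 3)"
    using H[rule_format, of 7 1 1 7] by (simp add: Rel_def R5_eq opf_def all_bool_eq)
  have c3: "[V 0, V 6, V 6, V 0] \<in> prime_rel (Rel 3)"
    using H[rule_format, of 0 6 6 0] by (simp add: Rel_def R5_eq opf_def all_bool_eq)
  show "V 12 = V 10" using c0 c1 c2 c3 unfolding mem3 by argo
qed
lemma Rel1: "Rel 1 = R1" by (simp add: Rel_def)
lemma Rel2: "Rel 2 = R2" by (simp add: Rel_def)
lemma Rel3: "Rel 3 = R3" by (simp add: Rel_def)
lemma Rel4: "Rel 4 = R4" by (simp add: Rel_def)
lemma Rel5: "Rel 5 = R5" by (simp add: Rel_def)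
lemma const_pres:
  assumes C: "is_constant_fun n f" and S: "\<forall>c. [c,c,c,c] \<in> S"
  shows "preserves n f R S"
  unfolding preserves_def
proof (intro allI impI)
  fix as :: "bool list list" assume A: "length as = n \<and> set as \<subseteq> R"
  obtain c where c: "\<forall>xs. length xs = n \<longrightarrow> f xs = c" using C unfolding is_constant_fun_def by blast
  have "map (\<lambda>k. f (map (\<lambda>a. a ! k) as)) [0..<4] = [c,c,c,c]" using c A by (simp add: upt_rec)
  thus "map (\<lambda>k. f (map (\<lambda>a. a ! k) as)) [0..<4] \<in> S" using S by simp
qed

lemma case_1_1:
  assumes "\<not> preserves 1 id_fun (Rel 1) (prime_rel (Rel 1))"
    and "\<not> preserves 1 neg_fun (Rel 1) (prime_rel (Rel 1))"
  shows "\<forall>n f. preserves n f (Rel 1) (prime_rel (Rel 1)) \<longleftrightarrow> is_constant_fun n f"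
proof -
  have "preserves 1 id_fun (Rel 1) (prime_rel (Rel 1))" by (rule id_pres, subst Rel1) (simp only: R1_eq ball_simps list.map not_True_eq_False not_False_eq_True mem1, simp)
  thus ?thesis using assms by blast
qed

lemma case_1_2:
  assumes "\<not> preserves 1 id_fun (Rel 1) (prime_rel (Rel 2))"
    and "\<not> preserves 1 neg_fun (Rel 1) (prime_rel (Rel 2))"
  shows "\<forall>n f. preserves n f (Rel 1) (prime_rel (Rel 2)) \<longleftrightarrow> is_constant_fun n f"
  using good_const[OF good_1_2] const_pres[where S="prime_rel (Rel 2)"] mem2 by blast

lemma case_1_3:
  assumes "\<not> preserves 1 id_fun (Rel 1) (prime_rel (Rel 3))"
    and "\<not> preserves 1 neg_fun (Rel 1) (prime_rel (Rel 3))"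
  shows "\<forall>n f. preserves n f (Rel 1) (prime_rel (Rel 3)) \<longleftrightarrow> is_constant_fun n f"
  using good_const[OF good_1_3] const_pres[where S="prime_rel (Rel 3)"] mem3 by blast

lemma case_1_4:
  assumes "\<not> preserves 1 id_fun (Rel 1) (prime_rel (Rel 4))"
    and "\<not> preserves 1 neg_fun (Rel 1) (prime_rel (Rel 4))"
  shows "\<forall>n f. preserves n f (Rel 1) (prime_rel (Rel 4)) \<longleftrightarrow> is_constant_fun n f"
  using good_const[OF good_1_4] const_pres[where S="prime_rel (Rel 4)"] mem4 by blast

lemma case_1_5:
  assumes "\<not> preserves 1 id_fun (Rel 1) (prime_rel (Rel 5))"
    and "\<not> preserves 1 neg_fun (Rel 1) (prime_rel (Rel 5))"
  shows "\<forall>n f. preserves n f (Rel 1) (prime_rel (Rel 5)) \<longleftrightarrow> is_constant_fun n f"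
  using good_const[OF good_1_5] const_pres[where S="prime_rel (Rel 5)"] mem5 by blast

lemma case_2_1:
  assumes "\<not> preserves 1 id_fun (Rel 2) (prime_rel (Rel 1))"
    and "\<not> preserves 1 neg_fun (Rel 2) (prime_rel (Rel 1))"
  shows "\<forall>n f. preserves n f (Rel 2) (prime_rel (Rel 1)) \<longleftrightarrow> is_constant_fun n f"
proof -
  have "preserves 1 id_fun (Rel 2) (prime_rel (Rel 1))" by (rule id_pres, subst Rel2) (simp only: R2_eq ball_simps list.map not_True_eq_False not_False_eq_True mem1, simp)
  thus ?thesis using assms by blast
qed

lemma case_2_2:
  assumes "\<not> preserves 1 id_fun (Rel 2) (prime_rel (Rel 2))"
    and "\<not> preserves 1 neg_fun (Rel 2) (prime_rel (Rel 2))"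
  shows "\<forall>n f. preserves n f (Rel 2) (prime_rel (Rel 2)) \<longleftrightarrow> is_constant_fun n f"
proof -
  have "preserves 1 id_fun (Rel 2) (prime_rel (Rel 2))" by (rule id_pres, subst Rel2) (simp only: R2_eq ball_simps list.map not_True_eq_False not_False_eq_True mem2, simp)
  thus ?thesis using assms by blast
qed

lemma case_2_3:
  assumes "\<not> preserves 1 id_fun (Rel 2) (prime_rel (Rel 3))"
    and "\<not> preserves 1 neg_fun (Rel 2) (prime_rel (Rel 3))"
  shows "\<forall>n f. preserves n f (Rel 2) (prime_rel (Rel 3)) \<longleftrightarrow> is_constant_fun n f"
proof -
  have "preserves 1 neg_fun (Rel 2) (prime_rel (Rel 3))" by (rule neg_pres, subst Rel2) (simp only: R2_eq ball_simps list.map not_True_eq_False not_False_eq_True mem3, simp)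
  thus ?thesis using assms by blast
qed

lemma case_2_4:
  assumes "\<not> preserves 1 id_fun (Rel 2) (prime_rel (Rel 4))"
    and "\<not> preserves 1 neg_fun (Rel 2) (prime_rel (Rel 4))"
  shows "\<forall>n f. preserves n f (Rel 2) (prime_rel (Rel 4)) \<longleftrightarrow> is_constant_fun n f"
  using good_const[OF good_2_4] const_pres[where S="prime_rel (Rel 4)"] mem4 by blast

lemma case_2_5:
  assumes "\<not> preserves 1 id_fun (Rel 2) (prime_rel (Rel 5))"
    and "\<not> preserves 1 neg_fun (Rel 2) (prime_rel (Rel 5))"
  shows "\<forall>n f. preserves n f (Rel 2) (prime_rel (Rel 5)) \<longleftrightarrow> is_constant_fun n f"
  using good_const[OF good_2_5] const_pres[where S="prime_rel (Rel 5)"] mem5 by blast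

lemma case_3_1:
  assumes "\<not> preserves 1 id_fun (Rel 3) (prime_rel (Rel 1))"
    and "\<not> preserves 1 neg_fun (Rel 3) (prime_rel (Rel 1))"
  shows "\<forall>n f. preserves n f (Rel 3) (prime_rel (Rel 1)) \<longleftrightarrow> is_constant_fun n f"
proof -
  have "preserves 1 id_fun (Rel 3) (prime_rel (Rel 1))" by (rule id_pres, subst Rel3) (simp only: R3_eq ball_simps list.map not_True_eq_False not_False_eq_True mem1, simp)
  thus ?thesis using assms by blast
qed

lemma case_3_2:
  assumes "\<not> preserves 1 id_fun (Rel 3) (prime_rel (Rel 2))"
    and "\<not> preserves 1 neg_fun (Rel 3) (prime_rel (Rel 2))"
  shows "\<forall>n f. preserves n f (Rel 3) (prime_rel (Rel 2)) \<longleftrightarrow> is_constant_fun n f"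
proof -
  have "preserves 1 neg_fun (Rel 3) (prime_rel (Rel 2))" by (rule neg_pres, subst Rel3) (simp only: R3_eq ball_simps list.map not_True_eq_False not_False_eq_True mem2, simp)
  thus ?thesis using assms by blast
qed

lemma case_3_3:
  assumes "\<not> preserves 1 id_fun (Rel 3) (prime_rel (Rel 3))"
    and "\<not> preserves 1 neg_fun (Rel 3) (prime_rel (Rel 3))"
  shows "\<forall>n f. preserves n f (Rel 3) (prime_rel (Rel 3)) \<longleftrightarrow> is_constant_fun n f"
proof -
  have "preserves 1 id_fun (Rel 3) (prime_rel (Rel 3))" by (rule id_pres, subst Rel3) (simp only: R3_eq ball_simps list.map not_True_eq_False not_False_eq_True mem3, simp)
  thus ?thesis using assms by blast
qed

lemma case_3_4:
  assumes "\<not> preserves 1 id_fun (Rel 3) (prime_rel (Rel 4))"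
    and "\<not> preserves 1 neg_fun (Rel 3) (prime_rel (Rel 4))"
  shows "\<forall>n f. preserves n f (Rel 3) (prime_rel (Rel 4)) \<longleftrightarrow> is_constant_fun n f"
  using good_const[OF good_3_4] const_pres[where S="prime_rel (Rel 4)"] mem4 by blast

lemma case_3_5:
  assumes "\<not> preserves 1 id_fun (Rel 3) (prime_rel (Rel 5))"
    and "\<not> preserves 1 neg_fun (Rel 3) (prime_rel (Rel 5))"
  shows "\<forall>n f. preserves n f (Rel 3) (prime_rel (Rel 5)) \<longleftrightarrow> is_constant_fun n f"
  using good_const[OF good_3_5] const_pres[where S="prime_rel (Rel 5)"] mem5 by blast

lemma case_4_1:
  assumes "\<not> preserves 1 id_fun (Rel 4) (prime_rel (Rel 1))"
    and "\<not> preserves 1 neg_fun (Rel 4) (prime_rel (Rel 1))"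
  shows "\<forall>n f. preserves n f (Rel 4) (prime_rel (Rel 1)) \<longleftrightarrow> is_constant_fun n f"
proof -
  have "preserves 1 id_fun (Rel 4) (prime_rel (Rel 1))" by (rule id_pres, subst Rel4) (simp only: R4_eq ball_simps list.map not_True_eq_False not_False_eq_True mem1, simp)
  thus ?thesis using assms by blast
qed

lemma case_4_2:
  assumes "\<not> preserves 1 id_fun (Rel 4) (prime_rel (Rel 2))"
    and "\<not> preserves 1 neg_fun (Rel 4) (prime_rel (Rel 2))"
  shows "\<forall>n f. preserves n f (Rel 4) (prime_rel (Rel 2)) \<longleftrightarrow> is_constant_fun n f"
proof -
  have "preserves 1 id_fun (Rel 4) (prime_rel (Rel 2))" by (rule id_pres, subst Rel4) (simp only: R4_eq ball_simps list.map not_True_eq_False not_False_eq_True mem2, simp)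
  thus ?thesis using assms by blast
qed

lemma case_4_3:
  assumes "\<not> preserves 1 id_fun (Rel 4) (prime_rel (Rel 3))"
    and "\<not> preserves 1 neg_fun (Rel 4) (prime_rel (Rel 3))"
  shows "\<forall>n f. preserves n f (Rel 4) (prime_rel (Rel 3)) \<longleftrightarrow> is_constant_fun n f"
proof -
  have "preserves 1 id_fun (Rel 4) (prime_rel (Rel 3))" by (rule id_pres, subst Rel4) (simp only: R4_eq ball_simps list.map not_True_eq_False not_False_eq_True mem3, simp)
  thus ?thesis using assms by blast
qed

lemma case_4_4:
  assumes "\<not> preserves 1 id_fun (Rel 4) (prime_rel (Rel 4))"
    and "\<not> preserves 1 neg_fun (Rel 4) (prime_rel (Rel 4))"
  shows "\<forall>n f. preserves n f (Rel 4) (prime_rel (Rel 4)) \<longleftrightarrow> is_constant_fun n f"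
proof -
  have "preserves 1 id_fun (Rel 4) (prime_rel (Rel 4))" by (rule id_pres, subst Rel4) (simp only: R4_eq ball_simps list.map not_True_eq_False not_False_eq_True mem4, simp)
  thus ?thesis using assms by blast
qed

lemma case_4_5:
  assumes "\<not> preserves 1 id_fun (Rel 4) (prime_rel (Rel 5))"
    and "\<not> preserves 1 neg_fun (Rel 4) (prime_rel (Rel 5))"
  shows "\<forall>n f. preserves n f (Rel 4) (prime_rel (Rel 5)) \<longleftrightarrow> is_constant_fun n f"
proof -
  have "preserves 1 id_fun (Rel 4) (prime_rel (Rel 5))" by (rule id_pres, subst Rel4) (simp only: R4_eq ball_simps list.map not_True_eq_False not_False_eq_True mem5, simp)
  thus ?thesis using assms by blast
qed

lemma case_5_1:
  assumes "\<not> preserves 1 id_fun (Rel 5) (prime_rel (Rel 1))"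
    and "\<not> preserves 1 neg_fun (Rel 5) (prime_rel (Rel 1))"
  shows "\<forall>n f. preserves n f (Rel 5) (prime_rel (Rel 1)) \<longleftrightarrow> is_constant_fun n f"
proof -
  have "preserves 1 id_fun (Rel 5) (prime_rel (Rel 1))" by (rule id_pres, subst Rel5) (simp only: R5_eq ball_simps list.map not_True_eq_False not_False_eq_True mem1, simp)
  thus ?thesis using assms by blast
qed

lemma case_5_2:
  assumes "\<not> preserves 1 id_fun (Rel 5) (prime_rel (Rel 2))"
    and "\<not> preserves 1 neg_fun (Rel 5) (prime_rel (Rel 2))"
  shows "\<forall>n f. preserves n f (Rel 5) (prime_rel (Rel 2)) \<longleftrightarrow> is_constant_fun n f"
  using good_const[OF good_5_2] const_pres[where S="prime_rel (Rel 2)"] mem2 by blast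

lemma case_5_3:
  assumes "\<not> preserves 1 id_fun (Rel 5) (prime_rel (Rel 3))"
    and "\<not> preserves 1 neg_fun (Rel 5) (prime_rel (Rel 3))"
  shows "\<forall>n f. preserves n f (Rel 5) (prime_rel (Rel 3)) \<longleftrightarrow> is_constant_fun n f"
  using good_const[OF good_5_3] const_pres[where S="prime_rel (Rel 3)"] mem3 by blast

lemma case_5_4:
  assumes "\<not> preserves 1 id_fun (Rel 5) (prime_rel (Rel 4))"
    and "\<not> preserves 1 neg_fun (Rel 5) (prime_rel (Rel 4))"
  shows "\<forall>n f. preserves n f (Rel 5) (prime_rel (Rel 4)) \<longleftrightarrow> is_constant_fun n f"
proof -
  have "preserves 1 id_fun (Rel 5) (prime_rel (Rel 4))" by (rule id_pres, subst Rel5) (simp only: R5_eq ball_simps list.map not_True_eq_False not_False_eq_True mem4, simp)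
  thus ?thesis using assms by blast
qed

lemma case_5_5:
  assumes "\<not> preserves 1 id_fun (Rel 5) (prime_rel (Rel 5))"
    and "\<not> preserves 1 neg_fun (Rel 5) (prime_rel (Rel 5))"
  shows "\<forall>n f. preserves n f (Rel 5) (prime_rel (Rel 5)) \<longleftrightarrow> is_constant_fun n f"
proof -
  have "preserves 1 id_fun (Rel 5) (prime_rel (Rel 5))" by (rule id_pres, subst Rel5) (simp only: R5_eq ball_simps list.map not_True_eq_False not_False_eq_True mem5, simp)
  thus ?thesis using assms by blast
qed

theorem mainTheorem5:
  fixes i j :: nat
  assumes "i \<in> {1..5}" and "j \<in> {1..5}"
    and "\<not> preserves 1 id_fun (Rel i) (prime_rel (Rel j))"
    and "\<not> preserves 1 neg_fun (Rel i) (prime_rel (Rel j))"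
  shows "\<forall>n f. preserves n f (Rel i) (prime_rel (Rel j)) \<longleftrightarrow> is_constant_fun n f"
proof -
  have "i = 1 \<or> i = 2 \<or> i = 3 \<or> i = 4 \<or> i = 5" "j = 1 \<or> j = 2 \<or> j = 3 \<or> j = 4 \<or> j = 5" using assms(1,2) by auto
  thus ?thesis using assms(3,4) case_1_1 case_1_2 case_1_3 case_1_4 case_1_5 case_2_1 case_2_2 case_2_3 case_2_4 case_2_5 case_3_1 case_3_2 case_3_3 case_3_4 case_3_5 case_4_1 case_4_2 case_4_3 case_4_4 case_4_5 case_5_1 case_5_2 case_5_3 case_5_4 case_5_5 by (elim disjE) simp_all
qed

end
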